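(* Let $A$ be a Noetherian ring, $\mathcal{R}$ a standard graded ring with $\mathcal{R}_0=A$, and $X\in\operatorname{^*Mod}_f(\mathcal{R})$. Assume $\operatorname{Ass}_A X$ is finite and that there is $m$ such that $\operatorname{Ass}_A H^0_{\mathcal{R}_+}(X)_n=\operatorname{Ass}_A H^0_{\mathcal{R}_+}(X)_m$ for all $n\ge m$. Then there exists $n_0$ such that $\operatorname{Ass}_A X_n=\operatorname{Ass}_A X_{n_0}$ for all $n\ge n_0$.
   Context: A standard graded ring $\mathcal{R}=\bigoplus_{n\ge0}\mathcal{R}_n$ with $\mathcal{R}_0=A$ is a Noetherian $\mathbb{N}$-graded commutative ring generated as an $A$-algebra by finitely many elements of $\mathcal{R}_1$; $\mathcal{R}_+=\bigoplus_{n\ge1}\mathcal{R}_n$. $\operatorname{^*Mod}_f(\mathcal{R})$ is the full subcategory of graded $\mathcal{R}$-modules $X=\bigoplus_{n\in\mathbb{Z}}X_n$ with every $X_n$ a finitely generated $A$-module and $X_n=0$ for $n\ll0$. $H^0_{\mathcal{R}_+}(X)=\{x\in X:\mathcal{R}_+^k x=0\text{ for some }k\}$. $\operatorname{Ass}_A X$ denotes the associated primes of $X$ regarded as an $A$-module. *)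

theory Defs
  imports Main
begin

text \<open>The graded ring R is the whole type 'a; its grading is Rg :: nat => 'a set,
  with A = Rg 0. The graded module X is the whole type 'm with scalar action sm
  and grading Xg :: int => 'm set.\<close>

definition add_subgroup :: "'a::ab_group_add set \<Rightarrow> bool" where
  "add_subgroup S \<longleftrightarrow> 0 \<in> S \<and> (\<forall>x\<in>S. \<forall>y\<in>S. x + y \<in> S) \<and> (\<forall>x\<in>S. - x \<in> S)"

definition ring_ideal :: "'a::comm_ring_1 set \<Rightarrow> 'a set \<Rightarrow> bool" where
  "ring_ideal A I \<longleftrightarrow> I \<subseteq> A \<and> add_subgroup I \<and> (\<forall>a\<in>A. \<forall>x\<in>I. a * x \<in> I)"

definition fin_gen_ideal :: "'a::comm_ring_1 set \<Rightarrow> 'a set \<Rightarrow> bool" where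
  "fin_gen_ideal A I \<longleftrightarrow>
     (\<exists>F. finite F \<and> F \<subseteq> I \<and> I = {(\<Sum>g\<in>F. c g * g) | c. \<forall>g\<in>F. c g \<in> A})"

definition noetherian_subring :: "'a::comm_ring_1 set \<Rightarrow> bool" where
  "noetherian_subring A \<longleftrightarrow> (\<forall>I. ring_ideal A I \<longrightarrow> fin_gen_ideal A I)"

definition prime_ideal_in :: "'a::comm_ring_1 set \<Rightarrow> 'a set \<Rightarrow> bool" where
  "prime_ideal_in A P \<longleftrightarrow> ring_ideal A P \<and> P \<noteq> A \<and>
     (\<forall>a\<in>A. \<forall>b\<in>A. a * b \<in> P \<longrightarrow> a \<in> P \<or> b \<in> P)"

definition graded_ring :: "(nat \<Rightarrow> 'a::comm_ring_1 set) \<Rightarrow> bool" where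
  "graded_ring Rg \<longleftrightarrow>
     (\<forall>n. add_subgroup (Rg n)) \<and> 1 \<in> Rg 0 \<and>
     (\<forall>i j. \<forall>x\<in>Rg i. \<forall>y\<in>Rg j. x * y \<in> Rg (i + j)) \<and>
     (\<forall>r. \<exists>!f. (\<forall>n. f n \<in> Rg n) \<and> finite {n. f n \<noteq> 0} \<and> r = (\<Sum>n\<in>{n. f n \<noteq> 0}. f n))"

definition algebra_generated :: "'a::comm_ring_1 set \<Rightarrow> 'a set \<Rightarrow> 'a set" where
  "algebra_generated A G = \<Inter> {S. A \<union> G \<subseteq> S \<and> add_subgroup S \<and> 1 \<in> S \<and>
                                   (\<forall>x\<in>S. \<forall>y\<in>S. x * y \<in> S)}"

definition standard_graded :: "(nat \<Rightarrow> 'a::comm_ring_1 set) \<Rightarrow> bool" where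
  "standard_graded Rg \<longleftrightarrow> graded_ring Rg \<and> noetherian_subring (UNIV :: 'a set) \<and>
     (\<exists>G. finite G \<and> G \<subseteq> Rg 1 \<and> algebra_generated (Rg 0) G = UNIV)"

definition Rplus :: "(nat \<Rightarrow> 'a::comm_ring_1 set) \<Rightarrow> 'a set" where
  "Rplus Rg = {r. \<exists>f. (\<forall>n. f n \<in> Rg n) \<and> f 0 = 0 \<and> finite {n. f n \<noteq> 0} \<and>
                      r = (\<Sum>n\<in>{n. f n \<noteq> 0}. f n)}"

definition module_ax :: "('a::comm_ring_1 \<Rightarrow> 'm::ab_group_add \<Rightarrow> 'm) \<Rightarrow> bool" where
  "module_ax sm \<longleftrightarrow> (\<forall>a b x. sm (a + b) x = sm a x + sm b x) \<and>
     (\<forall>a x y. sm a (x + y) = sm a x + sm a y) \<and>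
     (\<forall>a b x. sm (a * b) x = sm a (sm b x)) \<and> (\<forall>x. sm 1 x = x)"

definition graded_module ::
  "(nat \<Rightarrow> 'a::comm_ring_1 set) \<Rightarrow> ('a \<Rightarrow> 'm::ab_group_add \<Rightarrow> 'm) \<Rightarrow> (int \<Rightarrow> 'm set) \<Rightarrow> bool" where
  "graded_module Rg sm Xg \<longleftrightarrow> module_ax sm \<and> (\<forall>n. add_subgroup (Xg n)) \<and>
     (\<forall>i n. \<forall>r\<in>Rg i. \<forall>x\<in>Xg n. sm r x \<in> Xg (int i + n)) \<and>
     (\<forall>x. \<exists>!f. (\<forall>n. f n \<in> Xg n) \<and> finite {n. f n \<noteq> 0} \<and> x = (\<Sum>n\<in>{n. f n \<noteq> 0}. f n))"

definition fin_gen_module :: "'a::comm_ring_1 set \<Rightarrow> ('a \<Rightarrow> 'm::ab_group_add \<Rightarrow> 'm) \<Rightarrow> 'm set \<Rightarrow> bool" where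
  "fin_gen_module A sm M \<longleftrightarrow>
     (\<exists>F. finite F \<and> F \<subseteq> M \<and> M = {(\<Sum>g\<in>F. sm (c g) g) | c. \<forall>g\<in>F. c g \<in> A})"

definition starModf ::
  "(nat \<Rightarrow> 'a::comm_ring_1 set) \<Rightarrow> ('a \<Rightarrow> 'm::ab_group_add \<Rightarrow> 'm) \<Rightarrow> (int \<Rightarrow> 'm set) \<Rightarrow> bool" where
  "starModf Rg sm Xg \<longleftrightarrow> graded_module Rg sm Xg \<and> (\<forall>n. fin_gen_module (Rg 0) sm (Xg n)) \<and>
     (\<exists>n1. \<forall>n<n1. Xg n = {0})"

definition ann :: "'a::comm_ring_1 set \<Rightarrow> ('a \<Rightarrow> 'm::ab_group_add \<Rightarrow> 'm) \<Rightarrow> 'm \<Rightarrow> 'a set" where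
  "ann A sm x = {a\<in>A. sm a x = 0}"

definition Ass :: "'a::comm_ring_1 set \<Rightarrow> ('a \<Rightarrow> 'm::ab_group_add \<Rightarrow> 'm) \<Rightarrow> 'm set \<Rightarrow> 'a set set" where
  "Ass A sm M = {P. prime_ideal_in A P \<and> (\<exists>x\<in>M. P = ann A sm x)}"

text \<open>H^0_{R_+}(X) = {x. R_+^k x = 0 for some k}; R_+^k is generated by k-fold products.\<close>
definition H0 :: "(nat \<Rightarrow> 'a::comm_ring_1 set) \<Rightarrow> ('a \<Rightarrow> 'm::ab_group_add \<Rightarrow> 'm) \<Rightarrow> 'm set" where
  "H0 Rg sm = {x. \<exists>k. \<forall>rs. length rs = k \<and> set rs \<subseteq> Rplus Rg \<longrightarrow> sm (prod_list rs) x = 0}"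

end

theory Submission
  imports Defs
begin

lemma asg_0: "add_subgroup S \<Longrightarrow> 0 \<in> S" by (simp add: add_subgroup_def)
lemma asg_add: "add_subgroup S \<Longrightarrow> x \<in> S \<Longrightarrow> y \<in> S \<Longrightarrow> x + y \<in> S" by (simp add: add_subgroup_def)
lemma asg_neg: "add_subgroup S \<Longrightarrow> x \<in> S \<Longrightarrow> - x \<in> S" by (simp add: add_subgroup_def)

lemma sm_0l: "module_ax sm \<Longrightarrow> sm 0 x = 0"
proof -
  assume m: "module_ax sm"
  have "sm (0+0) x = sm 0 x + sm 0 x" using m unfolding module_ax_def by blast
  thus ?thesis by simp
qed

lemma sm_0r: "module_ax sm \<Longrightarrow> sm a 0 = 0"
proof -
  assume m: "module_ax sm"
  have "sm a (0+0) = sm a 0 + sm a 0" using m unfolding module_ax_def by blast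
  thus ?thesis by simp
qed

lemma sm_add: "module_ax sm \<Longrightarrow> sm (a + b) x = sm a x + sm b x" by (simp add: module_ax_def)
lemma sm_mult: "module_ax sm \<Longrightarrow> sm (a * b) x = sm a (sm b x)" by (simp add: module_ax_def)
lemma sm_1: "module_ax sm \<Longrightarrow> sm 1 x = x" by (simp add: module_ax_def)

lemma sm_sum: "module_ax sm \<Longrightarrow> sm (\<Sum>n\<in>F. f n) x = (\<Sum>n\<in>F. sm (f n) x)"
  by (induction F rule: infinite_finite_induct) (auto simp: sm_0l sm_add)

definition dec :: "(nat \<Rightarrow> 'a::comm_ring_1 set) \<Rightarrow> 'a \<Rightarrow> nat \<Rightarrow> 'a" where
  "dec Rg r = (THE f. (\<forall>n. f n \<in> Rg n) \<and> finite {n. f n \<noteq> 0} \<and> r = (\<Sum>n\<in>{n. f n \<noteq> 0}. f n))"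

lemma graded_uniq:
  assumes "graded_ring Rg"
  shows "\<exists>!f. (\<forall>n. f n \<in> Rg n) \<and> finite {n. f n \<noteq> 0} \<and> r = (\<Sum>n\<in>{n. f n \<noteq> 0}. f n)"
proof -
  have "\<forall>r. \<exists>!f. (\<forall>n. f n \<in> Rg n) \<and> finite {n. f n \<noteq> 0} \<and> r = (\<Sum>n\<in>{n. f n \<noteq> 0}. f n)"
    using assms unfolding graded_ring_def by (rule conjunct2[THEN conjunct2, THEN conjunct2])
  thus ?thesis by (rule spec)
qed

lemma dec_unique:
  assumes "graded_ring Rg" "\<forall>n. f n \<in> Rg n" "finite {n. f n \<noteq> 0}" "r = (\<Sum>n\<in>{n. f n \<noteq> 0}. f n)"
  shows "dec Rg r = f"
  unfolding dec_def
  apply (rule the1_equality)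
   apply (rule graded_uniq[OF assms(1)])
  using assms(2-4) by (intro conjI)

lemma dec_prop:
  assumes "graded_ring Rg"
  shows "(\<forall>n. dec Rg r n \<in> Rg n) \<and> finite {n. dec Rg r n \<noteq> 0} \<and> r = (\<Sum>n\<in>{n. dec Rg r n \<noteq> 0}. dec Rg r n)"
  unfolding dec_def
  by (rule theI'[OF graded_uniq[OF assms]])

lemma dec_sum:
  assumes "graded_ring Rg" "\<forall>n. f n \<in> Rg n" "finite F" "{n. f n \<noteq> 0} \<subseteq> F"
  shows "dec Rg (\<Sum>n\<in>F. f n) = f"
proof -
  have "(\<Sum>n\<in>F. f n) = (\<Sum>n\<in>{n. f n \<noteq> 0}. f n)"
    by (rule sum.mono_neutral_right) (use assms in auto)
  thus ?thesis using assms by (intro dec_unique) (auto intro: finite_subset)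
qed

lemma dec_sum_supp:
  assumes "graded_ring Rg" "finite F" "{n. dec Rg r n \<noteq> 0} \<subseteq> F"
  shows "r = (\<Sum>n\<in>F. dec Rg r n)"
proof -
  have "(\<Sum>n\<in>F. dec Rg r n) = (\<Sum>n\<in>{n. dec Rg r n \<noteq> 0}. dec Rg r n)"
    by (rule sum.mono_neutral_right) (use assms in auto)
  thus ?thesis using dec_prop[OF assms(1), of r] by simp
qed

lemma dec_hom:
  assumes "graded_ring Rg" "a \<in> Rg k"
  shows "dec Rg a = (\<lambda>n. if n = k then a else 0)"
proof -
  have g: "\<forall>n. add_subgroup (Rg n)" using assms(1) by (simp add: graded_ring_def)
  have "dec Rg (\<Sum>n\<in>{k}. (\<lambda>n. if n = k then a else 0) n) = (\<lambda>n. if n = k then a else 0)"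
    by (rule dec_sum) (use assms g asg_0 in auto)
  thus ?thesis by simp
qed

lemma dec_add:
  assumes "graded_ring Rg"
  shows "dec Rg (r + s) = (\<lambda>n. dec Rg r n + dec Rg s n)"
proof -
  let ?F = "{n. dec Rg r n \<noteq> 0} \<union> {n. dec Rg s n \<noteq> 0}"
  have f: "finite ?F" using dec_prop[OF assms] by auto
  have "r + s = (\<Sum>n\<in>?F. dec Rg r n) + (\<Sum>n\<in>?F. dec Rg s n)"
    using dec_sum_supp[OF assms f] by auto
  also have "\<dots> = (\<Sum>n\<in>?F. dec Rg r n + dec Rg s n)" by (simp add: sum.distrib)
  finally have e: "r + s = (\<Sum>n\<in>?F. dec Rg r n + dec Rg s n)" .
  have g: "\<forall>n. add_subgroup (Rg n)" using assms(1) by (simp add: graded_ring_def)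
  show ?thesis unfolding e
  proof (rule dec_sum[OF assms])
    have "dec Rg r n \<in> Rg n" "dec Rg s n \<in> Rg n" for n using dec_prop[OF assms] by blast+
    thus "\<forall>n. dec Rg r n + dec Rg s n \<in> Rg n" using g asg_add by blast
    show "finite ?F" by (rule f)
    show "{n. dec Rg r n + dec Rg s n \<noteq> 0} \<subseteq> ?F" by auto
  qed
qed

lemma dec_neg:
  assumes "graded_ring Rg"
  shows "dec Rg (- r) = (\<lambda>n. - dec Rg r n)"
proof -
  let ?F = "{n. dec Rg r n \<noteq> 0}"
  have f: "finite ?F" using dec_prop[OF assms] by auto
  have e: "- r = (\<Sum>n\<in>?F. - dec Rg r n)"
    using dec_sum_supp[OF assms f] by (simp add: sum_negf)
  have g: "\<forall>n. add_subgroup (Rg n)" using assms(1) by (simp add: graded_ring_def)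
  show ?thesis unfolding e
  proof (rule dec_sum[OF assms])
    have "dec Rg r n \<in> Rg n" for n using dec_prop[OF assms] by blast
    thus "\<forall>n. - dec Rg r n \<in> Rg n" using g asg_neg by blast
    show "finite ?F" by (rule f)
    show "{n. - dec Rg r n \<noteq> 0} \<subseteq> ?F" by auto
  qed
qed

lemma dec_multA:
  assumes "graded_ring Rg" "a \<in> Rg 0"
  shows "dec Rg (a * r) = (\<lambda>n. a * dec Rg r n)"
proof -
  let ?F = "{n. dec Rg r n \<noteq> 0}"
  have f: "finite ?F" using dec_prop[OF assms(1)] by auto
  have r0: "r = (\<Sum>n\<in>?F. dec Rg r n)" using dec_sum_supp[OF assms(1) f] by blast
  have e: "a * r = (\<Sum>n\<in>?F. a * dec Rg r n)"
    by (subst r0) (simp add: sum_distrib_left)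
  have m: "\<forall>i j. \<forall>x\<in>Rg i. \<forall>y\<in>Rg j. x * y \<in> Rg (i + j)" using assms(1) by (simp add: graded_ring_def)
  show ?thesis unfolding e
  proof (rule dec_sum[OF assms(1)])
    have "dec Rg r n \<in> Rg n" for n using dec_prop[OF assms(1)] by blast
    hence "a * dec Rg r n \<in> Rg (0 + n)" for n using m assms(2) by blast
    thus "\<forall>n. a * dec Rg r n \<in> Rg n" by simp
    show "finite ?F" by (rule f)
    show "{n. a * dec Rg r n \<noteq> 0} \<subseteq> ?F" by auto
  qed
qed

lemma dec_mult1:
  assumes "graded_ring Rg" "g \<in> Rg 1"
  shows "dec Rg (g * r) = (\<lambda>d. if d = 0 then 0 else g * dec Rg r (d - 1))"
proof -
  let ?F = "{n. dec Rg r n \<noteq> 0}"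
  let ?f = "\<lambda>d. if d = 0 then 0 else g * dec Rg r (d - 1)"
  have f: "finite ?F" using dec_prop[OF assms(1)] by auto
  have r0: "r = (\<Sum>n\<in>?F. dec Rg r n)" using dec_sum_supp[OF assms(1) f] by blast
  have "g * r = (\<Sum>n\<in>?F. g * dec Rg r n)"
    by (subst r0) (simp add: sum_distrib_left)
  also have "\<dots> = (\<Sum>n\<in>?F. ?f (Suc n))" by simp
  also have "\<dots> = (\<Sum>d\<in>Suc ` ?F. ?f d)" by (simp add: sum.reindex)
  finally have e: "g * r = (\<Sum>d\<in>Suc ` ?F. ?f d)" .
  have m: "\<forall>i j. \<forall>x\<in>Rg i. \<forall>y\<in>Rg j. x * y \<in> Rg (i + j)" using assms(1) by (simp add: graded_ring_def)
  have g: "\<forall>n. add_subgroup (Rg n)" using assms(1) by (simp add: graded_ring_def)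
  have mem: "\<forall>n. ?f n \<in> Rg n"
  proof
    fix n show "?f n \<in> Rg n"
    proof (cases n)
      case 0
      have "(0::'a) \<in> Rg 0" using asg_0 g by blast
      thus ?thesis using 0 by simp
    next
      case (Suc k)
      have "dec Rg r k \<in> Rg k" using dec_prop[OF assms(1)] by blast
      hence "g * dec Rg r k \<in> Rg (1 + k)" using m assms(2) by blast
      thus ?thesis using Suc by simp
    qed
  qed
  have sub: "{n. ?f n \<noteq> 0} \<subseteq> Suc ` ?F"
  proof
    fix d assume "d \<in> {n. ?f n \<noteq> 0}"
    then obtain k where k: "d = Suc k" "g * dec Rg r k \<noteq> 0" by (cases d) auto
    hence "dec Rg r k \<noteq> 0" by auto
    thus "d \<in> Suc ` ?F" using k by auto
  qed
  show ?thesis unfolding e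
    by (rule dec_sum[OF assms(1) mem _ sub]) (use f in simp)
qed



lemma kill_Rplus:
  assumes gr: "graded_ring Rg" and m: "module_ax sm" and G1: "G \<subseteq> Rg 1"
    and gen: "algebra_generated (Rg 0) G = UNIV"
    and kx: "\<forall>g\<in>G. sm g x = 0" and r: "r \<in> Rplus Rg"
  shows "sm r x = 0"
proof -
  define S where "S = {r. \<forall>d\<ge>1. sm (dec Rg r d) x = 0}"
  define S' where "S' = {r. \<forall>s\<in>S. r * s \<in> S}"
  have mR: "\<forall>i j. \<forall>x\<in>Rg i. \<forall>y\<in>Rg j. x * y \<in> Rg (i + j)" using gr by (simp add: graded_ring_def)
  have g: "\<forall>n. add_subgroup (Rg n)" using gr by (simp add: graded_ring_def)
  have one: "1 \<in> Rg 0" using gr by (simp add: graded_ring_def)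
  have S_add: "a + b \<in> S" if "a \<in> S" "b \<in> S" for a b
    using that unfolding S_def by (simp add: dec_add[OF gr] sm_add[OF m])
  have S_neg: "- a \<in> S" if "a \<in> S" for a
  proof -
    have "sm (- c) x = - sm c x" for c
    proof -
      have "sm (c + - c) x = sm c x + sm (- c) x" by (rule sm_add[OF m])
      hence "sm c x + sm (- c) x = 0" by (simp add: sm_0l[OF m])
      thus ?thesis by (simp add: add_eq_0_iff)
    qed
    thus ?thesis using that unfolding S_def by (simp add: dec_neg[OF gr])
  qed
  have S_0: "0 \<in> S" unfolding S_def
    using dec_hom[OF gr asg_0[OF g[rule_format, of 0]]] sm_0l[OF m] by simp
  have S_1: "1 \<in> S" unfolding S_def
    using dec_hom[OF gr one] sm_0l[OF m] by simp
  have AS': "a \<in> S'" if a: "a \<in> Rg 0" for a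
    unfolding S'_def
  proof (intro CollectI ballI)
    fix s assume "s \<in> S"
    hence s: "\<forall>d\<ge>1. sm (dec Rg s d) x = 0" by (simp add: S_def)
    have "sm (dec Rg (a * s) d) x = 0" if "d \<ge> 1" for d
      using s that by (simp add: dec_multA[OF gr a] sm_mult[OF m] sm_0r[OF m])
    thus "a * s \<in> S" unfolding S_def by blast
  qed
  have GS': "g \<in> S'" if "g \<in> G" for g
    unfolding S'_def
  proof (intro CollectI ballI)
    fix s assume "s \<in> S"
    hence s: "\<forall>d\<ge>1. sm (dec Rg s d) x = 0" by (simp add: S_def)
    have gR: "g \<in> Rg 1" using that G1 by blast
    show "g * s \<in> S" unfolding S_def
    proof (intro CollectI allI impI)
      fix d :: nat assume d: "d \<ge> 1"
      show "sm (dec Rg (g * s) d) x = 0"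
      proof (cases "d = 1")
        case True
        hence "sm (dec Rg (g * s) d) x = sm (dec Rg s 0 * g) x"
          by (simp add: dec_mult1[OF gr gR] mult.commute)
        also have "\<dots> = 0" using kx that by (simp add: sm_mult[OF m] sm_0r[OF m])
        finally show ?thesis .
      next
        case False
        hence "sm (dec Rg (g * s) d) x = sm g (sm (dec Rg s (d - 1)) x)"
          using d by (simp add: dec_mult1[OF gr gR] sm_mult[OF m])
        also have "\<dots> = 0" using s False d by (simp add: sm_0r[OF m])
        finally show ?thesis .
      qed
    qed
  qed
  have "algebra_generated (Rg 0) G \<subseteq> S'"
    unfolding algebra_generated_def
  proof (rule Inter_lower, intro CollectI conjI)
    show "Rg 0 \<union> G \<subseteq> S'" using AS' GS' by blast
    show "add_subgroup S'" unfolding add_subgroup_def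
    proof (intro conjI ballI)
      show "0 \<in> S'" unfolding S'_def using S_0 by simp
      fix a b assume "a \<in> S'" "b \<in> S'"
      thus "a + b \<in> S'" unfolding S'_def using S_add by (simp add: distrib_right)
    next
      fix a assume "a \<in> S'"
      thus "- a \<in> S'" unfolding S'_def using S_neg by simp
    qed
    show "1 \<in> S'" unfolding S'_def by simp
    show "\<forall>x\<in>S'. \<forall>y\<in>S'. x * y \<in> S'" unfolding S'_def by (simp add: mult.assoc)
  qed
  hence "r \<in> S'" using gen by blast
  hence "r * 1 \<in> S" using S_1 unfolding S'_def by blast
  hence rS: "r \<in> S" by simp
  from r obtain f where f: "\<forall>n. f n \<in> Rg n" "f 0 = 0" "finite {n. f n \<noteq> 0}"
      "r = (\<Sum>n\<in>{n. f n \<noteq> 0}. f n)" unfolding Rplus_def by blast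
  have df: "dec Rg r = f" using dec_unique[OF gr f(1) f(3) f(4)] .
  have "sm r x = (\<Sum>n\<in>{n. f n \<noteq> 0}. sm (f n) x)"
    by (subst f(4)) (rule sm_sum[OF m])
  also have "\<dots> = 0"
  proof (rule sum.neutral, rule ballI)
    fix n assume "n \<in> {n. f n \<noteq> 0}"
    hence "n \<ge> 1" using f(2) by (cases n) auto
    moreover have "\<forall>d\<ge>1. sm (dec Rg r d) x = 0" using rS unfolding S_def by blast
    ultimately show "sm (f n) x = 0" unfolding df by blast
  qed
  finally show ?thesis .
qed

lemma Ass_mono: "M \<subseteq> N \<Longrightarrow> Ass A sm M \<subseteq> Ass A sm N"
  unfolding Ass_def by blast

lemma stab:
  fixes D :: "int \<Rightarrow> 'b set"
  assumes U: "finite U" and DU: "\<And>n. n \<ge> m \<Longrightarrow> D n \<subseteq> U"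
    and inc: "\<And>n. n \<ge> m \<Longrightarrow> D n \<subseteq> D (n + 1)"
  shows "\<exists>n0\<ge>m. \<forall>n\<ge>n0. D n = D n0"
proof -
  have mono: "D a \<subseteq> D (a + int k)" if a: "a \<ge> m" for a k
  proof (induction k)
    case 0 show ?case by simp
  next
    case (Suc k)
    have "D (a + int k) \<subseteq> D (a + int k + 1)" using inc a by simp
    moreover have "a + int (Suc k) = a + int k + 1" by simp
    ultimately show ?case using Suc.IH by (metis order_trans)
  qed
  let ?C = "(\<lambda>n. card (D n)) ` {m..}"
  have CU: "?C \<subseteq> {..card U}"
  proof
    fix c assume "c \<in> ?C"
    then obtain n where n: "n \<ge> m" "c = card (D n)" by auto
    have "card (D n) \<le> card U" by (rule card_mono[OF U DU[OF n(1)]])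
    thus "c \<in> {..card U}" using n by simp
  qed
  have fC: "finite ?C" by (rule finite_subset[OF CU]) simp
  have neC: "?C \<noteq> {}" by auto
  obtain n0 where n0: "n0 \<ge> m" "card (D n0) = Max ?C"
    using Max_in[OF fC neC] by auto
  have "\<forall>n\<ge>n0. D n = D n0"
  proof (intro allI impI)
    fix n assume n: "n \<ge> n0"
    have e: "n = n0 + int (nat (n - n0))" using n by simp
    have sub: "D n0 \<subseteq> D n" using mono[OF n0(1), of "nat (n - n0)"] e by simp
    have nm: "n \<ge> m" using n n0(1) by simp
    have fin: "finite (D n)" using finite_subset[OF DU[OF nm] U] .
    have "card (D n) \<in> ?C" using nm by simp
    hence "card (D n) \<le> Max ?C" by (rule Max_ge[OF fC])
    hence "card (D n) \<le> card (D n0)" using n0(2) by simp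
    hence "card (D n0) = card (D n)" using card_mono[OF fin sub] by linarith
    from card_subset_eq[OF fin sub this] show "D n = D n0" by (rule sym)
  qed
  thus ?thesis using n0(1) by blast
qed

lemma step:
  assumes gr: "graded_ring Rg" and m: "module_ax sm" and fG: "finite G" and G1: "G \<subseteq> Rg 1"
    and gen: "algebra_generated (Rg 0) G = UNIV"
    and grad: "\<forall>i n. \<forall>r\<in>Rg i. \<forall>x\<in>Xg n. sm r x \<in> Xg (int i + n)"
    and PX: "P \<in> Ass (Rg 0) sm (Xg n)"
    and PT: "P \<notin> Ass (Rg 0) sm (H0 Rg sm \<inter> Xg n)"
  shows "P \<in> Ass (Rg 0) sm (Xg (n + 1))"
proof (rule ccontr)
  assume nP: "P \<notin> Ass (Rg 0) sm (Xg (n + 1))"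
  let ?A = "Rg 0"
  from PX obtain x where x: "x \<in> Xg n" "P = ann ?A sm x" and pr: "prime_ideal_in ?A P"
    unfolding Ass_def by blast
  have PA: "P \<subseteq> ?A" and Pid: "\<forall>a\<in>?A. \<forall>y\<in>P. a * y \<in> P" and PneA: "P \<noteq> ?A"
    and Ppr: "\<forall>a\<in>?A. \<forall>b\<in>?A. a * b \<in> P \<longrightarrow> a \<in> P \<or> b \<in> P"
    using pr unfolding prime_ideal_in_def ring_ideal_def by auto
  have mR: "\<forall>i j. \<forall>x\<in>Rg i. \<forall>y\<in>Rg j. x * y \<in> Rg (i + j)" using gr by (simp add: graded_ring_def)
  have Amul: "a * b \<in> ?A" if "a \<in> ?A" "b \<in> ?A" for a b
    using mR that by (metis add_0)
  have one: "1 \<in> ?A" using gr by (simp add: graded_ring_def)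
  have Px: "b \<in> P \<longleftrightarrow> b \<in> ?A \<and> sm b x = 0" for b
    using x(2) unfolding ann_def by blast
  have "\<exists>a. a \<in> ?A \<and> a \<notin> P \<and> sm a (sm g x) = 0" if g: "g \<in> G" for g
  proof -
    have gR: "g \<in> Rg 1" using g G1 by blast
    have "sm g x \<in> Xg (int 1 + n)" using grad gR x(1) by blast
    hence gx: "sm g x \<in> Xg (n + 1)" by (simp add: add.commute)
    have sub: "P \<subseteq> ann ?A sm (sm g x)"
    proof
      fix b assume b: "b \<in> P"
      have "sm b (sm g x) = sm g (sm b x)" using m by (simp add: sm_mult[symmetric] mult.commute)
      also have "\<dots> = 0" using b Px sm_0r[OF m] by simp
      finally show "b \<in> ann ?A sm (sm g x)" using b PA unfolding ann_def by blast
    qed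
    have "ann ?A sm (sm g x) \<noteq> P"
    proof
      assume "ann ?A sm (sm g x) = P"
      hence "P \<in> Ass ?A sm (Xg (n + 1))" using gx pr unfolding Ass_def by blast
      thus False using nP by blast
    qed
    then obtain a where "a \<in> ann ?A sm (sm g x)" "a \<notin> P" using sub by blast
    thus ?thesis unfolding ann_def by blast
  qed
  then obtain af where af: "\<And>g. g \<in> G \<Longrightarrow> af g \<in> ?A \<and> af g \<notin> P \<and> sm (af g) (sm g x) = 0"
    by metis
  have prodF: "F \<subseteq> G \<Longrightarrow> prod af F \<in> ?A \<and> prod af F \<notin> P" for F
  proof (induction F rule: infinite_finite_induct)
    case (infinite F) thus ?case using fG finite_subset by blast
  next
    case empty
    have "1 \<notin> P"
    proof
      assume "1 \<in> P"
      hence "?A \<subseteq> P" using Pid by force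
      thus False using PA PneA by blast
    qed
    thus ?case using one by simp
  next
    case (insert g F)
    hence IH: "prod af F \<in> ?A" "prod af F \<notin> P" and g: "af g \<in> ?A" "af g \<notin> P"
      using af by auto
    have "af g * prod af F \<in> ?A" using Amul IH g by blast
    moreover have "af g * prod af F \<notin> P" using Ppr IH g by blast
    ultimately show ?case using insert.hyps by simp
  qed
  define a where "a = prod af G"
  have aA: "a \<in> ?A" and aP: "a \<notin> P" using prodF[of G] unfolding a_def by auto
  define z where "z = sm a x"
  have "z \<in> Xg (int 0 + n)" unfolding z_def using grad aA x(1) by blast
  hence zX: "z \<in> Xg n" by simp
  have kz: "\<forall>g\<in>G. sm g z = 0"
  proof
    fix g assume g: "g \<in> G"
    have "a = af g * prod af (G - {g})" unfolding a_def using prod.remove[OF fG g] .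
    hence "g * a = prod af (G - {g}) * (af g * g)" by (simp add: ac_simps)
    hence "sm g z = sm (prod af (G - {g})) (sm (af g) (sm g x))"
      unfolding z_def by (simp add: sm_mult[OF m, symmetric])
    also have "\<dots> = 0" using af[OF g] sm_0r[OF m] by simp
    finally show "sm g z = 0" .
  qed
  have zH: "z \<in> H0 Rg sm" unfolding H0_def
  proof (intro CollectI exI[of _ 1] allI impI)
    fix rs :: "'a list" assume rs: "length rs = 1 \<and> set rs \<subseteq> Rplus Rg"
    then obtain r where r: "rs = [r]" by (cases rs) auto
    hence "r \<in> Rplus Rg" using rs by simp
    hence "sm r z = 0" using kill_Rplus[OF gr m G1 gen kz] by blast
    thus "sm (prod_list rs) z = 0" using r by simp
  qed
  have "ann ?A sm z = P"
  proof (intro set_eqI iffI)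
    fix b assume "b \<in> ann ?A sm z"
    hence b: "b \<in> ?A" "sm (b * a) x = 0" unfolding ann_def z_def by (auto simp: sm_mult[OF m])
    hence "b * a \<in> P" using Px Amul aA by blast
    thus "b \<in> P" using Ppr b(1) aA aP by blast
  next
    fix b assume b: "b \<in> P"
    hence bA: "b \<in> ?A" using PA by blast
    have "a * b \<in> P" using Pid aA b by blast
    hence "sm (b * a) x = 0" using Px by (simp add: mult.commute)
    thus "b \<in> ann ?A sm z" using bA unfolding ann_def z_def by (simp add: sm_mult[OF m])
  qed
  hence "P \<in> Ass ?A sm (H0 Rg sm \<inter> Xg n)" using zH zX pr unfolding Ass_def by blast
  thus False using PT by blast
qed

theorem theorem4p5:
  fixes Rg :: "nat \<Rightarrow> 'a::comm_ring_1 set"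
    and sm :: "'a \<Rightarrow> 'm::ab_group_add \<Rightarrow> 'm"
    and Xg :: "int \<Rightarrow> 'm set"
  assumes "noetherian_subring (Rg 0)"
    and "standard_graded Rg"
    and "starModf Rg sm Xg"
    and "finite (Ass (Rg 0) sm UNIV)"
    and "\<exists>m. \<forall>n\<ge>m. Ass (Rg 0) sm (H0 Rg sm \<inter> Xg n) = Ass (Rg 0) sm (H0 Rg sm \<inter> Xg m)"
  shows "\<exists>n0. \<forall>n\<ge>n0. Ass (Rg 0) sm (Xg n) = Ass (Rg 0) sm (Xg n0)"
proof -
  have gr: "graded_ring Rg" using assms(2) unfolding standard_graded_def by (rule conjunct1)
  have "\<exists>G. finite G \<and> G \<subseteq> Rg 1 \<and> algebra_generated (Rg 0) G = UNIV"
    using assms(2) unfolding standard_graded_def by (rule conjunct2[THEN conjunct2])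
  then obtain G where G: "finite G" "G \<subseteq> Rg 1" "algebra_generated (Rg 0) G = UNIV"
    by blast
  have gm: "graded_module Rg sm Xg" using assms(3) unfolding starModf_def by (rule conjunct1)
  have m: "module_ax sm" using gm unfolding graded_module_def by (rule conjunct1)
  have grad: "\<forall>i n. \<forall>r\<in>Rg i. \<forall>x\<in>Xg n. sm r x \<in> Xg (int i + n)"
    using gm unfolding graded_module_def by (rule conjunct2[THEN conjunct2, THEN conjunct1])
  obtain m0 where hm: "\<forall>n\<ge>m0. Ass (Rg 0) sm (H0 Rg sm \<inter> Xg n) = Ass (Rg 0) sm (H0 Rg sm \<inter> Xg m0)"
    using assms(5) by blast
  define T where "T = Ass (Rg 0) sm (H0 Rg sm \<inter> Xg m0)"
  define D where "D n = Ass (Rg 0) sm (Xg n) - T" for n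
  have hT: "Ass (Rg 0) sm (H0 Rg sm \<inter> Xg n) = T" if "n \<ge> m0" for n
    using hm that unfolding T_def by blast
  have TX: "T \<subseteq> Ass (Rg 0) sm (Xg n)" if "n \<ge> m0" for n
  proof -
    have "Ass (Rg 0) sm (H0 Rg sm \<inter> Xg n) \<subseteq> Ass (Rg 0) sm (Xg n)" by (rule Ass_mono) blast
    thus ?thesis using hT[OF that] by simp
  qed
  have "\<exists>n0\<ge>m0. \<forall>n\<ge>n0. D n = D n0"
  proof (rule stab[OF assms(4)])
    fix n :: int assume "n \<ge> m0"
    show "D n \<subseteq> Ass (Rg 0) sm UNIV" unfolding D_def using Ass_mono[of "Xg n" UNIV] by auto
  next
    fix n :: int assume n: "n \<ge> m0"
    show "D n \<subseteq> D (n + 1)"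
    proof
      fix P assume P: "P \<in> D n"
      hence "P \<notin> Ass (Rg 0) sm (H0 Rg sm \<inter> Xg n)" using hT[OF n] unfolding D_def by simp
      hence "P \<in> Ass (Rg 0) sm (Xg (n + 1))"
        using step[OF gr m G(1) G(2) G(3) grad] P unfolding D_def by blast
      thus "P \<in> D (n + 1)" using P unfolding D_def by blast
    qed
  qed
  then obtain n0 where n0: "n0 \<ge> m0" "\<forall>n\<ge>n0. D n = D n0" by blast
  have "\<forall>n\<ge>n0. Ass (Rg 0) sm (Xg n) = Ass (Rg 0) sm (Xg n0)"
  proof (intro allI impI)
    fix n assume n: "n \<ge> n0"
    have nm: "n \<ge> m0" using n n0(1) by simp
    have e1: "Ass (Rg 0) sm (Xg n) = T \<union> D n" using TX[OF nm] unfolding D_def by blast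
    have e2: "D n = D n0" using n0(2) n by blast
    have e3: "T \<union> D n0 = Ass (Rg 0) sm (Xg n0)" using TX[OF n0(1)] unfolding D_def by blast
    show "Ass (Rg 0) sm (Xg n) = Ass (Rg 0) sm (Xg n0)" by (simp only: e1 e2 e3)
  qed
  thus ?thesis by blast
qed

end
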